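(* Consider mixture models with $G$ and $G-1$ components for data $Y=(Y_1,\dots,Y_n)$, with marginal likelihoods $Z(G)$ and $Z(G-1)$. Suppose the proportions have a Dirichlet$(e_1,\dots,e_G)$ prior, $e_g>0$ (and Dirichlet$(e_1,\dots,e_{G-1})$ in the $(G-1)$-component model), the component parameters $\xi_1,\dots,\xi_G$ are a priori independent with a prior that does not depend on the total number of components, and the prior of the $G$-component model is invariant under relabelling of components. Let $\theta^{(1)},\dots,\theta^{(T)}$ be posterior draws in the $G$-component model and define $$\hat z^{(t)}_{i,g}=\frac{\tau_g^{(t)}f(Y_i;\xi_g^{(t)})}{\sum_{\tilde g=1}^G\tau^{(t)}_{\tilde g}f(Y_i;\xi^{(t)}_{\tilde g})},\qquad \hat p_0(G)=\frac1G\sum_{g=1}^G\frac1T\sum_{t=1}^T\prod_{i=1}^n\bigl(1-\hat z^{(t)}_{i,g}\bigr).$$ If $\hat Z(G-1)$ is a consistent estimator of $Z(G-1)$ and $\hat p_0(G)$ is a consistent estimator of its posterior mean $p_0(G)=\mathrm E[\frac1G\sum_g\prod_i(1-z_{i,g})\mid Y]$, assumed positive, then $$\hat Z(G)=\frac{\Gamma\bigl(\sum_{g=1}^Ge_g\bigr)\Gamma\bigl(n+\sum_{g=1}^{G-1}e_g\bigr)}{\Gamma\bigl(n+\sum_{g=1}^Ge_g\bigr)\Gamma\bigl(\sum_{g=1}^{G-1}e_g\bigr)}\cdot\hat Z(G-1)\cdot\frac{1}{\hat p_0(G)}$$ is a consistent estimator of $Z(G)$. Moreover $p_0(G)$ equals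 the posterior probability that component $G$ is empty (i.e. that no observation is allocated to it).
   Context: Mixture model: $Y_i$ i.i.d. with density $\sum_{g=1}^G\tau_g f(\cdot;\xi_g)$; equivalently, latent allocations $C_i\mid\tau\sim\mathrm{Multinom}_G(1,\tau)$ i.i.d. and $Y_i\mid\xi,C_{i,g}=1\sim f(\cdot;\xi_g)$. $z_{i,g}$ denotes the quantity $\hat z_{i,g}$ evaluated at a generic parameter $\theta$ (the conditional probability that $C_{i,g}=1$ given $Y,\theta$). Consistency is as the simulation size $T\to\infty$. *)

theory Defs
  imports "HOL-Probability.Probability"
begin

text \<open>Components are indexed 0,...,G-1; the paper's component G is index G-1.
  A parameter is theta = (tau, xi) with tau, xi extensional functions on {..<G}.\<close>

definition tau_of :: "nat \<Rightarrow> (nat \<Rightarrow> real) \<Rightarrow> nat \<Rightarrow> real" where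
  "tau_of G u = (\<lambda>g\<in>{..<G}. if g < G - 1 then u g else 1 - (\<Sum>h<G - 1. u h))"

text \<open>Dirichlet(e_0,...,e_{G-1}) density w.r.t. Lebesgue measure on the first G-1 coordinates.\<close>
definition dirichlet_dens :: "nat \<Rightarrow> (nat \<Rightarrow> real) \<Rightarrow> (nat \<Rightarrow> real) \<Rightarrow> real" where
  "dirichlet_dens G e u =
     (if (\<forall>g<G - 1. 0 \<le> u g) \<and> (\<Sum>g<G - 1. u g) \<le> 1
      then Gamma (\<Sum>g<G. e g) / (\<Prod>g<G. Gamma (e g)) * (\<Prod>g<G. tau_of G u g powr (e g - 1))
      else 0)"

definition dirichlet_measure :: "nat \<Rightarrow> (nat \<Rightarrow> real) \<Rightarrow> (nat \<Rightarrow> real) measure" where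
  "dirichlet_measure G e =
     distr (density (PiM {..<G - 1} (\<lambda>_. lborel)) (\<lambda>u. ennreal (dirichlet_dens G e u)))
           (PiM {..<G} (\<lambda>_. borel)) (tau_of G)"

text \<open>Prior of the G-component model: tau ~ Dirichlet(e_0..e_{G-1}) independent of
  xi_g ~ P g independently; the same P is used for every number of components.\<close>
definition mixture_prior ::
  "nat \<Rightarrow> (nat \<Rightarrow> real) \<Rightarrow> (nat \<Rightarrow> 'x measure) \<Rightarrow> ((nat \<Rightarrow> real) \<times> (nat \<Rightarrow> 'x)) measure" where
  "mixture_prior G e P = dirichlet_measure G e \<Otimes>\<^sub>M PiM {..<G} P"

definition mix_lik ::
  "('y \<Rightarrow> 'x \<Rightarrow> real) \<Rightarrow> (nat \<Rightarrow> 'y) \<Rightarrow> nat \<Rightarrow> nat \<Rightarrow> (nat \<Rightarrow> real) \<times> (nat \<Rightarrow> 'x) \<Rightarrow> real" where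
  "mix_lik f Y n G \<theta> = (\<Prod>i<n. \<Sum>g<G. fst \<theta> g * f (Y i) (snd \<theta> g))"

definition marg_lik ::
  "('y \<Rightarrow> 'x \<Rightarrow> real) \<Rightarrow> (nat \<Rightarrow> 'y) \<Rightarrow> nat \<Rightarrow> (nat \<Rightarrow> real) \<Rightarrow> (nat \<Rightarrow> 'x measure) \<Rightarrow> nat \<Rightarrow> ennreal" where
  "marg_lik f Y n e P G = (\<integral>\<^sup>+ \<theta>. ennreal (mix_lik f Y n G \<theta>) \<partial>mixture_prior G e P)"

definition posterior where
  "posterior f Y n e P G =
     density (mixture_prior G e P) (\<lambda>\<theta>. ennreal (mix_lik f Y n G \<theta>) / marg_lik f Y n e P G)"

text \<open>Joint posterior of (theta, C) where C is the allocation vector c :: {..<n} \<rightarrow> {..<G}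
  (c i = g means C_{i,g} = 1).\<close>
definition joint_posterior where
  "joint_posterior f Y n e P G =
     density (mixture_prior G e P \<Otimes>\<^sub>M count_space ({..<n} \<rightarrow>\<^sub>E {..<G}))
       (\<lambda>(\<theta>, c). ennreal (\<Prod>i<n. fst \<theta> (c i) * f (Y i) (snd \<theta> (c i))) / marg_lik f Y n e P G)"

definition zprob where
  "zprob f Y G \<theta> i g =
     fst \<theta> g * f (Y i) (snd \<theta> g) / (\<Sum>h<G. fst \<theta> h * f (Y i) (snd \<theta> h))"

definition p0 where
  "p0 f Y n e P G =
     (\<integral>\<theta>. (1 / real G) * (\<Sum>g<G. \<Prod>i<n. (1 - zprob f Y G \<theta> i g)) \<partial>posterior f Y n e P G)"

definition p0_hat where
  "p0_hat f Y n G draws T \<omega> =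
     (1 / real G) * (\<Sum>g<G. (1 / real T) * (\<Sum>t=1..T. \<Prod>i<n. (1 - zprob f Y G (draws t \<omega>) i g)))"

definition consistent :: "'w measure \<Rightarrow> (nat \<Rightarrow> 'w \<Rightarrow> real) \<Rightarrow> real \<Rightarrow> bool" where
  "consistent \<Omega> X c \<longleftrightarrow> (\<forall>T. X T \<in> borel_measurable \<Omega>) \<and>
     (\<forall>\<epsilon>>0. (\<lambda>T. measure \<Omega> {\<omega> \<in> space \<Omega>. \<bar>X T \<omega> - c\<bar> > \<epsilon>}) \<longlonglongrightarrow> 0)"

end

theory Submission
  imports Defs
begin

lemma beta_scaled:
  fixes a b s :: real
  assumes a: "a > 0" and b: "b > 0" and s: "s > 0"
  shows "(\<integral>\<^sup>+ y. ennreal (indicator {0..s} y * y powr (a - 1) * (s - y) powr (b - 1)) \<partial>lborel)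
         = ennreal (s powr (a + b - 1) * Beta a b)"
proof -
  have B: "(\<integral>\<^sup>+ t. ennreal (indicator {0..1} t * (t powr (a - 1) * (1 - t) powr (b - 1))) \<partial>lborel) = ennreal (Beta a b)"
    by (rule nn_integral_has_integral_lebesgue) (auto intro: has_integral_Beta_real[OF a b])
  have "(\<integral>\<^sup>+ y. ennreal (indicator {0..s} y * y powr (a - 1) * (s - y) powr (b - 1)) \<partial>lborel)
     = ennreal \<bar>s\<bar> * (\<integral>\<^sup>+ t. ennreal (indicator {0..s} (0 + s * t) * (0 + s * t) powr (a - 1) * (s - (0 + s * t)) powr (b - 1)) \<partial>lborel)"
    by (rule nn_integral_real_affine) (use s in auto)
  also have "(\<lambda>t. ennreal (indicator {0..s} (0 + s * t) * (0 + s * t) powr (a - 1) * (s - (0 + s * t)) powr (b - 1)))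
     = (\<lambda>t. ennreal (s powr (a + b - 2)) * ennreal (indicator {0..1} t * (t powr (a - 1) * (1 - t) powr (b - 1))))"
  proof
    fix t :: real
    have iff: "(s * t \<in> {0..s}) = (t \<in> {0..1})" using s
      by (auto simp: zero_le_mult_iff mult_le_cancel_left1)
    show "ennreal (indicator {0..s} (0 + s * t) * (0 + s * t) powr (a - 1) * (s - (0 + s * t)) powr (b - 1))
      = ennreal (s powr (a + b - 2)) * ennreal (indicator {0..1} t * (t powr (a - 1) * (1 - t) powr (b - 1)))"
    proof (cases "t \<in> {0..1}")
      case True
      have "s - s * t = s * (1 - t)" by (simp add: algebra_simps)
      moreover have "(s * t) powr (a - 1) = s powr (a - 1) * t powr (a - 1)"
        using True s by (simp add: powr_mult)
      moreover have "(s * (1 - t)) powr (b - 1) = s powr (b - 1) * (1 - t) powr (b - 1)"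
        using True s by (simp add: powr_mult)
      moreover have "s powr (a + b - 2) = s powr (a - 1) * s powr (b - 1)"
        using s by (simp add: powr_add[symmetric])
      ultimately show ?thesis using True iff s
        by (simp add: ennreal_mult[symmetric] mult_ac)
    next
      case False
      then show ?thesis using iff by (auto simp: indicator_def)
    qed
  qed
  also have "ennreal \<bar>s\<bar> * (\<integral>\<^sup>+ t. ennreal (s powr (a + b - 2)) * ennreal (indicator {0..1} t * (t powr (a - 1) * (1 - t) powr (b - 1))) \<partial>lborel)
     = ennreal s * (ennreal (s powr (a + b - 2)) * ennreal (Beta a b))"
    using s by (subst nn_integral_cmult) (auto simp: B)
  also have "\<dots> = ennreal (s * s powr (a + b - 2) * Beta a b)"
    using s a b by (simp add: ennreal_mult[symmetric] Beta_def Gamma_real_pos mult_ac)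
  also have "s * s powr (a + b - 2) = s powr (a + b - 1)"
    using s by (simp add: powr_add[symmetric] powr_mult_base)
  finally show ?thesis .
qed

definition simp_int :: "nat \<Rightarrow> real \<Rightarrow> (nat \<Rightarrow> real) \<Rightarrow> (nat \<Rightarrow> real) \<Rightarrow> real" where
  "simp_int k r a x = (if (\<forall>g<k. 0 \<le> x g) \<and> (\<Sum>g<k. x g) \<le> r
     then (\<Prod>g<k. x g powr (a g - 1)) * (r - (\<Sum>g<k. x g)) powr (a k - 1) else 0)"

lemma simp_int_nonneg: "simp_int k r a x \<ge> 0"
  by (auto simp: simp_int_def intro!: prod_nonneg mult_nonneg_nonneg)

lemma simp_int_meas[measurable]: "(\<lambda>x. simp_int k r a x) \<in> borel_measurable (PiM {..<k} (\<lambda>_. lborel))"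
  unfolding simp_int_def by measurable

lemma simp_int_Suc:
  "simp_int (Suc k) r a (x(k := y)) =
    (if (\<forall>g<k. 0 \<le> x g) \<and> (\<Sum>g<k. x g) \<le> r then (\<Prod>g<k. x g powr (a g - 1)) else 0) *
    (indicator {0..r - (\<Sum>g<k. x g)} y * y powr (a k - 1) * ((r - (\<Sum>g<k. x g)) - y) powr (a (Suc k) - 1))"
proof -
  have s: "(\<Sum>g<Suc k. (x(k := y)) g) = (\<Sum>g<k. x g) + y"
    by (simp add: sum.lessThan_Suc)
  have p: "(\<Prod>g<Suc k. (x(k := y)) g powr (a g - 1)) = (\<Prod>g<k. x g powr (a g - 1)) * y powr (a k - 1)"
    by (simp add: prod.lessThan_Suc)
  have q: "(\<forall>g<Suc k. 0 \<le> (x(k := y)) g) = ((\<forall>g<k. 0 \<le> x g) \<and> 0 \<le> y)"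
    by (auto simp: less_Suc_eq)
  show ?thesis
    unfolding simp_int_def s p q by (auto simp: indicator_def algebra_simps)
qed

lemma dirichlet_integral:
  assumes "\<forall>g\<le>k. a g > 0" "r > 0"
  shows "(\<integral>\<^sup>+ x. ennreal (simp_int k r a x) \<partial>PiM {..<k} (\<lambda>_. lborel))
     = ennreal (r powr ((\<Sum>g\<le>k. a g) - 1) * (\<Prod>g\<le>k. Gamma (a g)) / Gamma (\<Sum>g\<le>k. a g))"
  using assms
proof (induction k arbitrary: a)
  case 0
  interpret product_sigma_finite "\<lambda>_::nat. lborel :: real measure" by standard
  have "Gamma (a 0) \<noteq> 0" using 0 by (simp add: Gamma_real_pos less_imp_neq[symmetric])
  then show ?case
    using 0 by (simp add: PiM_empty nn_integral_count_space_finite simp_int_def less_imp_le)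
next
  case (Suc k)
  interpret product_sigma_finite "\<lambda>_::nat. lborel :: real measure" by standard
  define a' where "a' = a(k := a k + a (Suc k))"
  define B where "B = Beta (a k) (a (Suc k))"
  have ak: "a k > 0" "a (Suc k) > 0" using Suc.prems by auto
  have B0: "B \<ge> 0" unfolding B_def Beta_def using ak by (simp add: Gamma_real_pos less_imp_le)
  have IH: "(\<integral>\<^sup>+ x. ennreal (simp_int k r a' x) \<partial>PiM {..<k} (\<lambda>_. lborel))
     = ennreal (r powr ((\<Sum>g\<le>k. a' g) - 1) * (\<Prod>g\<le>k. Gamma (a' g)) / Gamma (\<Sum>g\<le>k. a' g))"
    by (intro Suc.IH) (use Suc.prems ak in \<open>auto simp: a'_def add_pos_pos\<close>)
  have inner: "(\<integral>\<^sup>+ y. ennreal (simp_int (Suc k) r a (x(k := y))) \<partial>lborel) = ennreal (simp_int k r a' x * B)" for x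
  proof -
    define c where "c = (if (\<forall>g<k. 0 \<le> x g) \<and> (\<Sum>g<k. x g) \<le> r then (\<Prod>g<k. x g powr (a g - 1)) else 0)"
    define s where "s = r - (\<Sum>g<k. x g)"
    have c0: "c \<ge> 0" unfolding c_def by (auto intro!: prod_nonneg)
    have "(\<integral>\<^sup>+ y. ennreal (simp_int (Suc k) r a (x(k := y))) \<partial>lborel)
       = (\<integral>\<^sup>+ y. ennreal c * ennreal (indicator {0..s} y * y powr (a k - 1) * (s - y) powr (a (Suc k) - 1)) \<partial>lborel)"
      unfolding simp_int_Suc c_def[symmetric] s_def[symmetric] using c0
      by (intro nn_integral_cong) (simp add: ennreal_mult)
    also have "\<dots> = ennreal c * (\<integral>\<^sup>+ y. ennreal (indicator {0..s} y * y powr (a k - 1) * (s - y) powr (a (Suc k) - 1)) \<partial>lborel)"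
      by (rule nn_integral_cmult) measurable
    also have "\<dots> = ennreal (simp_int k r a' x * B)"
    proof (cases "s > 0")
      case True
      show ?thesis
        unfolding beta_scaled[OF ak True] using c0 B0 True
        by (auto simp: ennreal_mult[symmetric] simp_int_def c_def s_def a'_def B_def mult_ac)
    next
      case False
      have z: "(\<lambda>y. ennreal (indicator {0..s} y * y powr (a k - 1) * (s - y) powr (a (Suc k) - 1))) = (\<lambda>_. 0)"
      proof
        fix y
        show "ennreal (indicator {0..s} y * y powr (a k - 1) * (s - y) powr (a (Suc k) - 1)) = 0"
          using False by (cases "y \<in> {0..s}") (auto simp: indicator_def)
      qed
      have "simp_int k r a' x = 0"
        using False by (auto simp: simp_int_def s_def)
      then show ?thesis by (simp add: z)
    qed
    finally show ?thesis .
  qed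
  have "(\<integral>\<^sup>+ x. ennreal (simp_int (Suc k) r a x) \<partial>PiM {..<Suc k} (\<lambda>_. lborel))
     = (\<integral>\<^sup>+ x. (\<integral>\<^sup>+ y. ennreal (simp_int (Suc k) r a (x(k := y))) \<partial>lborel) \<partial>PiM {..<k} (\<lambda>_. lborel))"
    unfolding lessThan_Suc by (rule product_nn_integral_insert) (auto simp flip: lessThan_Suc)
  also have "\<dots> = (\<integral>\<^sup>+ x. ennreal (simp_int k r a' x) * ennreal B \<partial>PiM {..<k} (\<lambda>_. lborel))"
    using B0 by (simp add: inner ennreal_mult simp_int_nonneg)
  also have "\<dots> = ennreal (r powr ((\<Sum>g\<le>k. a' g) - 1) * (\<Prod>g\<le>k. Gamma (a' g)) / Gamma (\<Sum>g\<le>k. a' g)) * ennreal B"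
    by (subst nn_integral_multc) (auto simp: IH)
  also have "\<dots> = ennreal (r powr ((\<Sum>g\<le>Suc k. a g) - 1) * (\<Prod>g\<le>Suc k. Gamma (a g)) / Gamma (\<Sum>g\<le>Suc k. a g))"
  proof -
    have sa: "(\<Sum>g\<le>k. a' g) = (\<Sum>g\<le>Suc k. a g)"
      by (simp add: a'_def atMost_Suc lessThan_Suc_atMost[symmetric] sum.lessThan_Suc)
    have pa: "(\<Prod>g\<le>k. Gamma (a' g)) = (\<Prod>g<k. Gamma (a g)) * Gamma (a k + a (Suc k))"
      by (simp add: a'_def lessThan_Suc_atMost[symmetric] prod.lessThan_Suc)
    have pb: "(\<Prod>g\<le>Suc k. Gamma (a g)) = (\<Prod>g<k. Gamma (a g)) * Gamma (a k) * Gamma (a (Suc k))"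
      by (simp add: lessThan_Suc_atMost[symmetric] prod.lessThan_Suc)
    have g: "Gamma (a k + a (Suc k)) > 0" using ak by (simp add: Gamma_real_pos)
    have gp: "Gamma (\<Sum>g\<le>Suc k. a g) > 0" using Suc.prems by (intro Gamma_real_pos sum_pos) auto
    have pp: "(\<Prod>g<k. Gamma (a g)) \<ge> 0" using Suc.prems by (intro prod_nonneg) (auto intro: less_imp_le Gamma_real_pos)
    have "r powr ((\<Sum>g\<le>k. a' g) - 1) * (\<Prod>g\<le>k. Gamma (a' g)) / Gamma (\<Sum>g\<le>k. a' g) * B
       = r powr ((\<Sum>g\<le>Suc k. a g) - 1) * (\<Prod>g\<le>Suc k. Gamma (a g)) / Gamma (\<Sum>g\<le>Suc k. a g)"
      unfolding sa pa pb B_def Beta_def using g by (simp add: field_simps)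
    moreover have "r powr ((\<Sum>g\<le>k. a' g) - 1) * (\<Prod>g\<le>k. Gamma (a' g)) / Gamma (\<Sum>g\<le>k. a' g) \<ge> 0"
      unfolding sa pa using g gp pp by (intro divide_nonneg_nonneg mult_nonneg_nonneg) auto
    ultimately show ?thesis using B0 by (simp add: ennreal_mult[symmetric])
  qed
  finally show ?case .
qed

lemma tau_of_meas[measurable]:
  "tau_of G \<in> measurable (PiM {..<G - 1} (\<lambda>_. lborel)) (PiM {..<G} (\<lambda>_. borel))"
  unfolding tau_of_def
proof (rule measurable_restrict)
  fix i assume "i \<in> {..<G}"
  show "(\<lambda>u. if i < G - 1 then u i else 1 - (\<Sum>h<G - 1. u h)) \<in> borel_measurable (PiM {..<G - 1} (\<lambda>_. lborel))"
  proof (cases "i < G - 1")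
    case True
    then show ?thesis by simp
  next
    case False
    then show ?thesis by simp
  qed
qed

lemma tau_of_meas'[measurable]:
  "tau_of G \<in> measurable (PiM {..<G - Suc 0} (\<lambda>_. lborel)) (PiM {..<G} (\<lambda>_. borel))"
  using tau_of_meas[of G] by simp

lemma dirichlet_dens_meas[measurable]:
  "(\<lambda>u. dirichlet_dens G e u) \<in> borel_measurable (PiM {..<G - 1} (\<lambda>_. lborel))"
proof -
  have "(\<lambda>u. \<Prod>g<G. tau_of G u g powr (e g - 1)) \<in> borel_measurable (PiM {..<G - 1} (\<lambda>_. lborel))"
  proof (intro borel_measurable_prod)
    fix g assume "g \<in> {..<G}"
    have "(\<lambda>u. tau_of G u g) \<in> borel_measurable (PiM {..<G - 1} (\<lambda>_. lborel))"
      using measurable_comp[OF tau_of_meas measurable_component_singleton[of g "{..<G}" "\<lambda>_. borel"]] \<open>g \<in> {..<G}\<close>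
      by (simp add: comp_def)
    then show "(\<lambda>u. tau_of G u g powr (e g - 1)) \<in> borel_measurable (PiM {..<G - 1} (\<lambda>_. lborel))"
      by measurable
  qed
  then show ?thesis unfolding dirichlet_dens_def by measurable
qed

lemma dirichlet_dens_meas'[measurable]:
  "(\<lambda>u. dirichlet_dens G e u) \<in> borel_measurable (PiM {..<G - Suc 0} (\<lambda>_. lborel))"
  using dirichlet_dens_meas[of G e] by simp

lemma pow_powr_merge: "(x::real) \<ge> 0 \<Longrightarrow> x ^ m * x powr (e - 1) = x powr (e + real m - 1)"
proof (cases "x = 0")
  case False
  assume "x \<ge> 0"
  then have "x > 0" using False by simp
  then show ?thesis by (simp add: powr_realpow[symmetric] powr_add[symmetric] algebra_simps)
qed simp

lemma sum_e_pos:
  fixes G :: nat assumes "G \<ge> 1" "\<forall>g<G. e g > 0" shows "(\<Sum>g<G. e g) > (0::real)"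
proof -
  have "0 \<in> {..<G}" using assms(1) by simp
  then have "{..<G} \<noteq> {}" by blast
  then show ?thesis using assms(2) by (intro sum_pos) auto
qed

lemma dirichlet_moment:
  fixes m :: "nat \<Rightarrow> nat"
  assumes G: "G \<ge> 1" and e: "\<forall>g<G. e g > 0"
  shows "(\<integral>\<^sup>+ \<tau>. ennreal (\<Prod>g<G. \<tau> g ^ m g) \<partial>dirichlet_measure G e)
     = ennreal (Gamma (\<Sum>g<G. e g) / (\<Prod>g<G. Gamma (e g)) * (\<Prod>g<G. Gamma (e g + real (m g)))
         / Gamma ((\<Sum>g<G. e g) + real (\<Sum>g<G. m g)))"
proof -
  obtain k where k: "G = Suc k" using G by (cases G) auto
  define K where "K = Gamma (\<Sum>g<G. e g) / (\<Prod>g<G. Gamma (e g))"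
  define a where "a = (\<lambda>g. e g + real (m g))"
  have se: "(\<Sum>g<G. e g) > 0" using sum_e_pos[OF G e] .
  have K0: "K \<ge> 0" unfolding K_def using e se
    by (intro divide_nonneg_nonneg prod_nonneg) (auto intro!: less_imp_le Gamma_real_pos)
  have pw: "ennreal (dirichlet_dens G e u) * ennreal (\<Prod>g<G. tau_of G u g ^ m g) = ennreal (K * simp_int k 1 a u)" for u
  proof (cases "(\<forall>g<k. 0 \<le> u g) \<and> (\<Sum>g<k. u g) \<le> 1")
    case True
    have t0: "tau_of G u g \<ge> 0" if "g < G" for g
      using True that by (auto simp: tau_of_def k)
    have "(\<Prod>g<G. tau_of G u g powr (e g - 1)) * (\<Prod>g<G. tau_of G u g ^ m g)
        = (\<Prod>g<G. tau_of G u g powr (a g - 1))"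
      by (auto simp: prod.distrib[symmetric] a_def t0 mult.commute[of "_ powr _"] pow_powr_merge intro!: prod.cong)
    also have "\<dots> = (\<Prod>g<k. u g powr (a g - 1)) * (1 - (\<Sum>g<k. u g)) powr (a k - 1)"
      by (simp add: k prod.lessThan_Suc tau_of_def)
    finally have eq: "(\<Prod>g<G. tau_of G u g powr (e g - 1)) * (\<Prod>g<G. tau_of G u g ^ m g)
        = (\<Prod>g<k. u g powr (a g - 1)) * (1 - (\<Sum>g<k. u g)) powr (a k - 1)" .
    have dd: "dirichlet_dens G e u = K * (\<Prod>g<G. tau_of G u g powr (e g - 1))"
      using True by (simp add: dirichlet_dens_def K_def k)
    have d0: "dirichlet_dens G e u \<ge> 0"
      unfolding dd using K0 by (auto intro!: mult_nonneg_nonneg prod_nonneg)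
    have p0: "(\<Prod>g<G. tau_of G u g ^ m g) \<ge> 0" using t0 by (auto intro!: prod_nonneg)
    have "ennreal (dirichlet_dens G e u) * ennreal (\<Prod>g<G. tau_of G u g ^ m g)
        = ennreal (dirichlet_dens G e u * (\<Prod>g<G. tau_of G u g ^ m g))"
      by (rule ennreal_mult[OF d0 p0, symmetric])
    also have "dirichlet_dens G e u * (\<Prod>g<G. tau_of G u g ^ m g) = K * simp_int k 1 a u"
      unfolding dd mult.assoc eq using True by (simp add: simp_int_def)
    finally show ?thesis .
  next
    case False
    have "dirichlet_dens G e u = 0" using False unfolding dirichlet_dens_def k by auto
    moreover have "simp_int k 1 a u = 0" using False unfolding simp_int_def by auto
    ultimately show ?thesis by simp
  qed
  have "(\<integral>\<^sup>+ \<tau>. ennreal (\<Prod>g<G. \<tau> g ^ m g) \<partial>dirichlet_measure G e)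
      = (\<integral>\<^sup>+ u. ennreal (\<Prod>g<G. tau_of G u g ^ m g) \<partial>density (PiM {..<G - 1} (\<lambda>_. lborel)) (\<lambda>u. ennreal (dirichlet_dens G e u)))"
    unfolding dirichlet_measure_def by (subst nn_integral_distr) auto
  also have "\<dots> = (\<integral>\<^sup>+ u. ennreal (dirichlet_dens G e u) * ennreal (\<Prod>g<G. tau_of G u g ^ m g) \<partial>PiM {..<G - 1} (\<lambda>_. lborel))"
    by (subst nn_integral_density) auto
  also have "\<dots> = (\<integral>\<^sup>+ u. ennreal K * ennreal (simp_int k 1 a u) \<partial>PiM {..<k} (\<lambda>_. lborel))"
    unfolding pw using K0 simp_int_nonneg[of k 1 a] by (simp add: ennreal_mult k)
  also have "\<dots> = ennreal K * ennreal (1 powr ((\<Sum>g\<le>k. a g) - 1) * (\<Prod>g\<le>k. Gamma (a g)) / Gamma (\<Sum>g\<le>k. a g))"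
    using e by (subst nn_integral_cmult) (auto simp: dirichlet_integral a_def k add_pos_nonneg)
  also have "\<dots> = ennreal (Gamma (\<Sum>g<G. e g) / (\<Prod>g<G. Gamma (e g)) * (\<Prod>g<G. Gamma (e g + real (m g)))
         / Gamma ((\<Sum>g<G. e g) + real (\<Sum>g<G. m g)))"
  proof -
    have s: "(\<Sum>g\<le>k. a g) = (\<Sum>g<G. e g) + real (\<Sum>g<G. m g)"
      by (simp add: a_def k lessThan_Suc_atMost sum.distrib)
    have p: "(\<Prod>g\<le>k. Gamma (a g)) = (\<Prod>g<G. Gamma (e g + real (m g)))"
      by (simp add: a_def k lessThan_Suc_atMost)
    have ap: "a g > 0" if "g \<le> k" for g
    proof -
      have "e g > 0" using e that k by auto
      then show ?thesis unfolding a_def by (simp add: add_pos_nonneg)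
    qed
    have "(\<Prod>g\<le>k. Gamma (a g)) \<ge> 0"
      using ap by (intro prod_nonneg) (auto intro!: less_imp_le Gamma_real_pos)
    moreover have "Gamma (\<Sum>g\<le>k. a g) \<ge> 0"
      unfolding s using se by (intro less_imp_le Gamma_real_pos) (metis add_pos_nonneg of_nat_0_le_iff)
    ultimately
    show ?thesis using K0 unfolding s p
      by (simp add: ennreal_mult[symmetric] K_def)
  qed
  finally show ?thesis .
qed

lemma dirichlet_prob:
  assumes G: "G \<ge> 1" and e: "\<forall>g<G. e g > 0"
  shows "prob_space (dirichlet_measure G e)"
proof
  have "emeasure (dirichlet_measure G e) (space (dirichlet_measure G e))
     = (\<integral>\<^sup>+ \<tau>. ennreal (\<Prod>g<G. \<tau> g ^ (\<lambda>_. 0::nat) g) \<partial>dirichlet_measure G e)"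
    by simp
  also have "\<dots> = 1"
    unfolding dirichlet_moment[OF G e] using e G sum_e_pos[OF G e]
    by (auto simp: Gamma_real_pos less_imp_neq[symmetric] prod_pos sum_pos)
  finally show "emeasure (dirichlet_measure G e) (space (dirichlet_measure G e)) = 1" .
qed

lemma dirichlet_AE_nonneg:
  "AE \<tau> in dirichlet_measure G e. \<forall>g<G. \<tau> g \<ge> 0"
  unfolding dirichlet_measure_def
proof (subst AE_distr_iff)
  show "AE x in density (PiM {..<G - 1} (\<lambda>_. lborel)) (\<lambda>u. ennreal (dirichlet_dens G e u)). \<forall>g<G. 0 \<le> tau_of G x g"
    by (subst AE_density) (measurable, auto simp: dirichlet_dens_def tau_of_def)
qed (insert tau_of_meas[of G], auto)

definition cnt :: "nat \<Rightarrow> (nat \<Rightarrow> nat) \<Rightarrow> nat \<Rightarrow> nat" where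
  "cnt n c g = card {i. i < n \<and> c i = g}"

definition Mo :: "nat \<Rightarrow> (nat \<Rightarrow> real) \<Rightarrow> (nat \<Rightarrow> nat) \<Rightarrow> real" where
  "Mo K e m = Gamma (\<Sum>g<K. e g) / (\<Prod>g<K. Gamma (e g)) * (\<Prod>g<K. Gamma (e g + real (m g)))
         / Gamma ((\<Sum>g<K. e g) + real (\<Sum>g<K. m g))"

lemma sets_dirichlet: "sets (dirichlet_measure K e) = sets (PiM {..<K} (\<lambda>_. borel))"
  by (simp add: dirichlet_measure_def)

lemma sets_prior: "sets (mixture_prior K e P) = sets (PiM {..<K} (\<lambda>_. borel) \<Otimes>\<^sub>M PiM {..<K} P)"
  unfolding mixture_prior_def by (intro sets_pair_measure_cong sets_dirichlet refl)

lemma space_prior: "space (mixture_prior K e P) = space (PiM {..<K} (\<lambda>_. borel) \<Otimes>\<^sub>M PiM {..<K} P)"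
  using sets_eq_imp_space_eq[OF sets_prior] .

lemma meas_dir_comp[measurable]: "h < K \<Longrightarrow> (\<lambda>\<tau>. \<tau> h) \<in> borel_measurable (dirichlet_measure K e)"
  by (subst measurable_cong_sets[OF sets_dirichlet refl]) simp

lemma meas_Pi_comp:
  assumes "\<forall>g<K. sets (P g) = sets X" "\<forall>y. f y \<in> borel_measurable X" "h < K"
  shows "(\<lambda>\<xi>. f y (\<xi> h)) \<in> borel_measurable (PiM {..<K} P)"
proof -
  have "f y \<in> borel_measurable (P h)"
    using assms by (subst measurable_cong_sets[of _ X]) auto
  then show ?thesis
    using measurable_compose[OF measurable_component_singleton[of h "{..<K}" P]] assms(3) by auto
qed

lemma meas_prior_fst[measurable]: "h < K \<Longrightarrow> (\<lambda>\<theta>. fst \<theta> h) \<in> borel_measurable (mixture_prior K e P)"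
  unfolding mixture_prior_def by measurable

lemma meas_prior_f:
  assumes "\<forall>g<K. sets (P g) = sets X" "\<forall>y. f y \<in> borel_measurable X" "h < K"
  shows "(\<lambda>\<theta>. f y (snd \<theta> h)) \<in> borel_measurable (mixture_prior K e P)"
  using measurable_compose[OF measurable_snd meas_Pi_comp[OF assms]]
  unfolding mixture_prior_def .

lemma prod_cnt:
  assumes "c \<in> {..<n} \<rightarrow>\<^sub>E {..<K}"
  shows "(\<Prod>i<n. (\<tau>::nat \<Rightarrow> real) (c i)) = (\<Prod>g<K. \<tau> g ^ cnt n c g)"
proof -
  have "(\<Prod>g<K. \<tau> g ^ cnt n c g) = (\<Prod>g<K. \<Prod>i\<in>{x. x \<in> {..<n} \<and> c x = g}. \<tau> (c i))"
    by (intro prod.cong refl) (simp add: cnt_def)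
  also have "\<dots> = (\<Prod>i<n. \<tau> (c i))"
    by (rule prod.group) (use assms in auto)
  finally show ?thesis by simp
qed

lemma sum_cnt:
  assumes "c \<in> {..<n} \<rightarrow>\<^sub>E {..<K}"
  shows "(\<Sum>g<K. cnt n c g) = n"
proof -
  have "(\<Sum>g<K. cnt n c g) = (\<Sum>g<K. \<Sum>i\<in>{x. x \<in> {..<n} \<and> c x = g}. (1::nat))"
    by (intro sum.cong refl) (simp add: cnt_def)
  also have "\<dots> = (\<Sum>i<n. 1)"
    by (rule sum.group) (use assms in auto)
  finally show ?thesis by simp
qed

lemma factorize:
  assumes K: "K \<ge> 1" and e: "\<forall>g<K. e g > 0"
    and P: "\<forall>g<K. prob_space (P g) \<and> sets (P g) = sets X"
    and fm: "\<forall>y. f y \<in> borel_measurable X" and fn: "\<forall>y x. f y x \<ge> 0"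
    and c: "c \<in> {..<n} \<rightarrow>\<^sub>E {..<K}"
  shows "(\<integral>\<^sup>+\<theta>. ennreal (\<Prod>i<n. fst \<theta> (c i) * f (Y i) (snd \<theta> (c i))) \<partial>mixture_prior K e P)
      = ennreal (Mo K e (cnt n c)) * (\<integral>\<^sup>+\<xi>. ennreal (\<Prod>i<n. f (Y i) (\<xi> (c i))) \<partial>PiM {..<K} P)"
proof -
  let ?D = "dirichlet_measure K e" and ?Q = "PiM {..<K} P"
  interpret D: prob_space ?D using dirichlet_prob[OF K e] .
  interpret Q: prob_space ?Q using P by (intro prob_space_PiM) auto
  interpret DQ: pair_sigma_finite ?D ?Q by standard
  have ci: "c i < K" if "i < n" for i using c that by auto
  have mA: "(\<lambda>\<tau>. ennreal (\<Prod>i<n. \<tau> (c i))) \<in> borel_measurable ?D"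
    using ci by (intro measurable_compose[OF _ measurable_ennreal] borel_measurable_prod) auto
  have mB: "(\<lambda>\<xi>. ennreal (\<Prod>i<n. f (Y i) (\<xi> (c i)))) \<in> borel_measurable ?Q"
    using ci P fm by (intro measurable_compose[OF _ measurable_ennreal] borel_measurable_prod meas_Pi_comp) auto
  have "(\<integral>\<^sup>+\<theta>. ennreal (\<Prod>i<n. fst \<theta> (c i) * f (Y i) (snd \<theta> (c i))) \<partial>mixture_prior K e P)
      = (\<integral>\<^sup>+\<theta>. ennreal (\<Prod>i<n. fst \<theta> (c i)) * ennreal (\<Prod>i<n. f (Y i) (snd \<theta> (c i))) \<partial>(?D \<Otimes>\<^sub>M ?Q))"
    unfolding mixture_prior_def using fn
    by (intro nn_integral_cong) (simp add: prod.distrib ennreal_mult'' prod_nonneg)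
  also have "\<dots> = (\<integral>\<^sup>+\<tau>. \<integral>\<^sup>+\<xi>. ennreal (\<Prod>i<n. \<tau> (c i)) * ennreal (\<Prod>i<n. f (Y i) (\<xi> (c i))) \<partial>?Q \<partial>?D)"
    using mA mB by (subst Q.nn_integral_fst[symmetric]) (auto simp: case_prod_beta)
  also have "\<dots> = (\<integral>\<^sup>+\<tau>. ennreal (\<Prod>i<n. \<tau> (c i)) * (\<integral>\<^sup>+\<xi>. ennreal (\<Prod>i<n. f (Y i) (\<xi> (c i))) \<partial>?Q) \<partial>?D)"
    using mB by (subst nn_integral_cmult) auto
  also have "\<dots> = (\<integral>\<^sup>+\<tau>. ennreal (\<Prod>i<n. \<tau> (c i)) \<partial>?D) * (\<integral>\<^sup>+\<xi>. ennreal (\<Prod>i<n. f (Y i) (\<xi> (c i))) \<partial>?Q)"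
    using mA by (subst nn_integral_multc) auto
  also have "(\<integral>\<^sup>+\<tau>. ennreal (\<Prod>i<n. \<tau> (c i)) \<partial>?D) = (\<integral>\<^sup>+\<tau>. ennreal (\<Prod>g<K. \<tau> g ^ cnt n c g) \<partial>?D)"
    using prod_cnt[OF c] by simp
  also have "\<dots> = ennreal (Mo K e (cnt n c))"
    unfolding dirichlet_moment[OF K e] Mo_def ..
  finally show ?thesis .
qed

definition Fx :: "nat \<Rightarrow> (nat \<Rightarrow> 'x measure) \<Rightarrow> ('y \<Rightarrow> 'x \<Rightarrow> real) \<Rightarrow> (nat \<Rightarrow> 'y) \<Rightarrow> nat \<Rightarrow> (nat \<Rightarrow> nat) \<Rightarrow> ennreal" where
  "Fx K P f Y n c = (\<integral>\<^sup>+\<xi>. ennreal (\<Prod>i<n. f (Y i) (\<xi> (c i))) \<partial>PiM {..<K} P)"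

lemma PiE_lt: "c \<in> {..<n} \<rightarrow>\<^sub>E {..<k} \<Longrightarrow> i < n \<Longrightarrow> c i < (k::nat)"
  using PiE_mem[of c "{..<n}" "\<lambda>_. {..<k}" i] by fastforce

lemma PiE_lt': "c \<in> {..<n} \<rightarrow>\<^sub>E {..<k} \<Longrightarrow> i < n \<Longrightarrow> k \<le> K \<Longrightarrow> c i < (K::nat)"
  using PiE_lt[of c n k i] by linarith

lemma PiE_mono': "c \<in> {..<n} \<rightarrow>\<^sub>E {..<k} \<Longrightarrow> k \<le> K \<Longrightarrow> c \<in> {..<n} \<rightarrow>\<^sub>E {..<(K::nat)}"
  using PiE_mono[of "{..<n}" "\<lambda>_. {..<k}" "\<lambda>_. {..<K}"] by auto

lemma prior_AE_nonneg:
  assumes K: "K \<ge> 1" and e: "\<forall>g<K. e g > 0"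
    and P: "\<forall>g<K. prob_space (P g) \<and> sets (P g) = sets X"
  shows "AE \<theta> in mixture_prior K e P. \<forall>g<K. fst \<theta> g \<ge> 0"
proof -
  let ?D = "dirichlet_measure K e" and ?Q = "PiM {..<K} P"
  interpret D: prob_space ?D using dirichlet_prob[OF K e] .
  interpret Q: prob_space ?Q using P by (intro prob_space_PiM) auto
  interpret DQ: pair_sigma_finite ?D ?Q by standard
  show ?thesis unfolding mixture_prior_def
  proof (rule DQ.AE_pair_measure)
    show "{x \<in> space (?D \<Otimes>\<^sub>M ?Q). \<forall>g<K. 0 \<le> fst x g} \<in> sets (?D \<Otimes>\<^sub>M ?Q)"
      by measurable
    show "AE x in ?D. AE y in ?Q. \<forall>g<K. 0 \<le> fst (x, y) g"
      using dirichlet_AE_nonneg[of K e] by eventually_elim auto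
  qed
qed

lemma expand_sum:
  assumes K: "K \<ge> 1" and e: "\<forall>g<K. e g > 0"
    and P: "\<forall>g<K. prob_space (P g) \<and> sets (P g) = sets X"
    and fm: "\<forall>y. f y \<in> borel_measurable X" and fn: "\<forall>y x. f y x \<ge> 0"
    and k: "k \<le> K"
  shows "(\<integral>\<^sup>+\<theta>. ennreal (\<Prod>i<n. \<Sum>g<k. fst \<theta> g * f (Y i) (snd \<theta> g)) \<partial>mixture_prior K e P)
     = (\<Sum>c\<in>{..<n} \<rightarrow>\<^sub>E {..<k}. ennreal (Mo K e (cnt n c)) * Fx K P f Y n c)"
proof -
  let ?C = "{..<n} \<rightarrow>\<^sub>E {..<k}"
  have "(\<integral>\<^sup>+\<theta>. ennreal (\<Prod>i<n. \<Sum>g<k. fst \<theta> g * f (Y i) (snd \<theta> g)) \<partial>mixture_prior K e P)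
     = (\<integral>\<^sup>+\<theta>. (\<Sum>c\<in>?C. ennreal (\<Prod>i<n. fst \<theta> (c i) * f (Y i) (snd \<theta> (c i)))) \<partial>mixture_prior K e P)"
  proof (rule nn_integral_cong_AE)
    show "AE \<theta> in mixture_prior K e P. ennreal (\<Prod>i<n. \<Sum>g<k. fst \<theta> g * f (Y i) (snd \<theta> g))
       = (\<Sum>c\<in>?C. ennreal (\<Prod>i<n. fst \<theta> (c i) * f (Y i) (snd \<theta> (c i))))"
      using prior_AE_nonneg[OF K e P]
    proof eventually_elim
      case (elim \<theta>)
      have nn: "0 \<le> (\<Prod>i<n. fst \<theta> (c i) * f (Y i) (snd \<theta> (c i)))" if "c \<in> ?C" for c
        using elim PiE_lt'[OF that _ k] fn by (intro prod_nonneg mult_nonneg_nonneg) auto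
      show ?case
        by (subst prod_sum_PiE) (auto simp: nn)
    qed
  qed
  also have "\<dots> = (\<Sum>c\<in>?C. \<integral>\<^sup>+\<theta>. ennreal (\<Prod>i<n. fst \<theta> (c i) * f (Y i) (snd \<theta> (c i))) \<partial>mixture_prior K e P)"
  proof (rule nn_integral_sum)
    fix c assume c: "c \<in> ?C"
    have ci: "c i < K" if "i < n" for i using PiE_lt'[OF c that k] .
    show "(\<lambda>\<theta>. ennreal (\<Prod>i<n. fst \<theta> (c i) * f (Y i) (snd \<theta> (c i)))) \<in> borel_measurable (mixture_prior K e P)"
      using ci P fm
      by (intro measurable_compose[OF _ measurable_ennreal] borel_measurable_prod borel_measurable_times meas_prior_fst meas_prior_f) auto
  qed
  also have "\<dots> = (\<Sum>c\<in>?C. ennreal (Mo K e (cnt n c)) * Fx K P f Y n c)"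
  proof (rule sum.cong[OF refl])
    fix c assume c: "c \<in> ?C"
    then have "c \<in> {..<n} \<rightarrow>\<^sub>E {..<K}" using PiE_mono'[OF _ k] by blast
    then show "(\<integral>\<^sup>+\<theta>. ennreal (\<Prod>i<n. fst \<theta> (c i) * f (Y i) (snd \<theta> (c i))) \<partial>mixture_prior K e P)
        = ennreal (Mo K e (cnt n c)) * Fx K P f Y n c"
      unfolding Fx_def by (rule factorize[OF K e P fm fn])
  qed
  finally show ?thesis .
qed

lemma Fx_drop:
  assumes K: "K \<ge> 2"
    and P: "\<forall>g<K. prob_space (P g) \<and> sets (P g) = sets X"
    and fm: "\<forall>y. f y \<in> borel_measurable X"
    and c: "c \<in> {..<n} \<rightarrow>\<^sub>E {..<K - 1}"
  shows "Fx K P f Y n c = Fx (K - 1) P f Y n c"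
proof -
  define P' where "P' = (\<lambda>i. if i < K then P i else P 0)"
  have P'p: "prob_space (P' i)" for i using P K by (auto simp: P'_def)
  interpret PS: product_prob_space P' by (auto simp: product_prob_space_def product_prob_space_axioms_def product_sigma_finite_def P'p prob_space_imp_sigma_finite)
  have eq1: "PiM {..<K} P = PiM (insert (K - 1) {..<K - 1}) P'"
    using K by (intro PiM_cong) (auto simp: P'_def)
  have eq2: "PiM {..<K - 1} P = PiM {..<K - 1} P'"
    by (intro PiM_cong) (auto simp: P'_def)
  have ci: "c i < K - 1" if "i < n" for i using c that by auto
  have ci': "c i < K" if "i < n" for i using ci[OF that] by simp
  have m: "(\<lambda>\<xi>. ennreal (\<Prod>i<n. f (Y i) (\<xi> (c i)))) \<in> borel_measurable (PiM (insert (K - 1) {..<K - 1}) P')"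
  proof -
    have "(\<lambda>\<xi>. ennreal (\<Prod>i<n. f (Y i) (\<xi> (c i)))) \<in> borel_measurable (PiM {..<K} P)"
      using ci' P fm K by (intro measurable_compose[OF _ measurable_ennreal] borel_measurable_prod meas_Pi_comp) auto
    then show ?thesis using eq1 by simp
  qed
  have "Fx K P f Y n c = (\<integral>\<^sup>+\<xi>. (\<integral>\<^sup>+y. ennreal (\<Prod>i<n. f (Y i) ((\<xi>(K - 1 := y)) (c i))) \<partial>P' (K - 1)) \<partial>PiM {..<K - 1} P')"
    unfolding Fx_def eq1 by (rule PS.product_nn_integral_insert[OF _ _ m]) auto
  also have "\<dots> = (\<integral>\<^sup>+\<xi>. (\<integral>\<^sup>+y. ennreal (\<Prod>i<n. f (Y i) (\<xi> (c i))) \<partial>P' (K - 1)) \<partial>PiM {..<K - 1} P')"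
  proof -
    have "(\<Prod>i<n. f (Y i) ((\<xi>(K - 1 := y)) (c i))) = (\<Prod>i<n. f (Y i) (\<xi> (c i)))" for \<xi> y
      using ci by (intro prod.cong refl) (metis fun_upd_other lessThan_iff less_irrefl)
    then show ?thesis by simp
  qed
  also have "\<dots> = Fx (K - 1) P f Y n c"
    unfolding Fx_def eq2 by (simp add: prob_space.emeasure_space_1[OF P'p])
  finally show ?thesis .
qed

definition Cst :: "nat \<Rightarrow> nat \<Rightarrow> (nat \<Rightarrow> real) \<Rightarrow> real" where
  "Cst n G e = Gamma (\<Sum>g<G. e g) * Gamma (real n + (\<Sum>g<G - 1. e g))
                   / (Gamma (real n + (\<Sum>g<G. e g)) * Gamma (\<Sum>g<G - 1. e g))"

lemma Gamma_pos_sum: "(x::real) > 0 \<Longrightarrow> Gamma (real n + x) > 0"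
  by (intro Gamma_real_pos) (simp add: add_nonneg_pos)

lemma Gamma_nonneg_pos: "(x::real) > 0 \<Longrightarrow> Gamma x \<ge> 0"
  using Gamma_real_pos[of x] by linarith

lemma Mo_nonneg:
  assumes K: "K \<ge> 1" and e: "\<forall>g<K. e g > 0"
  shows "Mo K e m \<ge> 0"
proof -
  have s: "(\<Sum>g<K. e g) > 0" by (rule sum_e_pos[OF K e])
  have "(\<Prod>g<K. Gamma (e g)) \<ge> 0" "(\<Prod>g<K. Gamma (e g + real (m g))) \<ge> 0"
    using e by (auto intro!: prod_nonneg Gamma_nonneg_pos add_pos_nonneg)
  moreover have "Gamma ((\<Sum>g<K. e g) + real (\<Sum>g<K. m g)) > 0"
    using Gamma_pos_sum[OF s, of "\<Sum>g<K. m g"] by (simp add: add.commute)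
  ultimately show ?thesis unfolding Mo_def using s
    by (intro divide_nonneg_nonneg mult_nonneg_nonneg) (auto intro: less_imp_le Gamma_real_pos)
qed

lemma Cst_pos:
  assumes G: "G \<ge> 2" and e: "\<forall>g<G. e g > 0"
  shows "Cst n G e > 0"
proof -
  have s1: "(\<Sum>g<G. e g) > 0" by (rule sum_e_pos) (use G e in auto)
  have s2: "(\<Sum>g<G - 1. e g) > 0" by (rule sum_e_pos) (use G e in auto)
  show ?thesis unfolding Cst_def using s1 s2
    by (intro divide_pos_pos mult_pos_pos Gamma_real_pos Gamma_pos_sum)
qed

lemma Mo_ratio:
  assumes k: "k \<ge> 1" and e: "\<forall>g<Suc k. e g > 0" and c: "c \<in> {..<n} \<rightarrow>\<^sub>E {..<k}"
  shows "Mo (Suc k) e (cnt n c) = Cst n (Suc k) e * Mo k e (cnt n c)"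
proof -
  have c0: "cnt n c k = 0"
    unfolding cnt_def using PiE_lt[OF c] by auto
  have s1: "(\<Sum>g<k. cnt n c g) = n" by (rule sum_cnt[OF c])
  define S where "S = (\<Sum>g<k. e g)"
  define PG where "PG = (\<Prod>g<k. Gamma (e g))"
  define Q where "Q = (\<Prod>g<k. Gamma (e g + real (cnt n c g)))"
  have S: "S > 0" unfolding S_def by (rule sum_e_pos) (use k e in auto)
  have ek: "e k > 0" using e by auto
  have PG: "PG \<noteq> 0" unfolding PG_def using e by (auto simp: prod_zero_iff Gamma_real_pos less_imp_neq[symmetric])
  have g1: "Gamma (e k) \<noteq> 0" using Gamma_real_pos[OF ek] by linarith
  have g2: "Gamma S \<noteq> 0" using Gamma_real_pos[OF S] by simp
  have g3: "Gamma (S + real n) \<noteq> 0" using Gamma_pos_sum[OF S, of n] by (simp add: add.commute)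
  have g4: "Gamma (S + e k + real n) \<noteq> 0" using Gamma_pos_sum[of "S + e k" n] S ek by (metis add.commute add_pos_pos less_irrefl)
  have g5: "Gamma (S + e k) \<noteq> 0" using Gamma_real_pos[of "S + e k"] S ek by (metis add_pos_pos less_irrefl)
  have m1: "Mo (Suc k) e (cnt n c) = Gamma (S + e k) / (PG * Gamma (e k)) * (Q * Gamma (e k)) / Gamma (S + e k + real n)"
    unfolding Mo_def S_def PG_def Q_def by (simp add: c0 s1)
  have m2: "Mo k e (cnt n c) = Gamma S / PG * Q / Gamma (S + real n)"
    unfolding Mo_def S_def PG_def Q_def by (simp add: s1)
  have m3: "Cst n (Suc k) e = Gamma (S + e k) * Gamma (S + real n) / (Gamma (S + e k + real n) * Gamma S)"
    unfolding Cst_def S_def by (simp add: add_ac)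
  show ?thesis unfolding m1 m2 m3 using g1 g2 g3 g4 g5 PG
    by (simp add: field_simps)
qed

lemma Z_relation:
  assumes G: "G \<ge> 2" and e: "\<forall>g<G. e g > 0"
    and P: "\<forall>g<G. prob_space (P g) \<and> sets (P g) = sets X"
    and fm: "\<forall>y. f y \<in> borel_measurable X" and fn: "\<forall>y x. f y x \<ge> 0"
  shows "(\<integral>\<^sup>+\<theta>. ennreal (\<Prod>i<n. \<Sum>g<G - 1. fst \<theta> g * f (Y i) (snd \<theta> g)) \<partial>mixture_prior G e P)
     = ennreal (Cst n G e) * marg_lik f Y n e P (G - 1)"
proof -
  obtain k where Gk: "G = Suc k" and k: "k \<ge> 1" using G by (cases G) auto
  have G1: "G \<ge> 1" using G by simp
  have ek: "\<forall>g<k. e g > 0" using e Gk by auto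
  have Pk: "\<forall>g<k. prob_space (P g) \<and> sets (P g) = sets X" using P Gk by auto
  have "(\<integral>\<^sup>+\<theta>. ennreal (\<Prod>i<n. \<Sum>g<G - 1. fst \<theta> g * f (Y i) (snd \<theta> g)) \<partial>mixture_prior G e P)
     = (\<Sum>c\<in>{..<n} \<rightarrow>\<^sub>E {..<k}. ennreal (Mo G e (cnt n c)) * Fx G P f Y n c)"
    using expand_sum[OF G1 e P fm fn, where k=k] Gk by simp
  also have "\<dots> = (\<Sum>c\<in>{..<n} \<rightarrow>\<^sub>E {..<k}. ennreal (Cst n G e) * (ennreal (Mo k e (cnt n c)) * Fx k P f Y n c))"
  proof (rule sum.cong[OF refl])
    fix c assume c: "c \<in> {..<n} \<rightarrow>\<^sub>E {..<k}"
    have "Fx G P f Y n c = Fx k P f Y n c"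
      using Fx_drop[OF G P fm, where c=c] c Gk by simp
    moreover have "Mo G e (cnt n c) = Cst n G e * Mo k e (cnt n c)"
      using Mo_ratio[OF k _ c] e Gk by simp
    ultimately show "ennreal (Mo G e (cnt n c)) * Fx G P f Y n c = ennreal (Cst n G e) * (ennreal (Mo k e (cnt n c)) * Fx k P f Y n c)"
      using Cst_pos[OF G e, of n] Mo_nonneg[OF k ek, of "cnt n c"]
      by (simp add: ennreal_mult mult.assoc)
  qed
  also have "\<dots> = ennreal (Cst n G e) * (\<Sum>c\<in>{..<n} \<rightarrow>\<^sub>E {..<k}. ennreal (Mo k e (cnt n c)) * Fx k P f Y n c)"
    by (simp add: sum_distrib_left)
  also have "(\<Sum>c\<in>{..<n} \<rightarrow>\<^sub>E {..<k}. ennreal (Mo k e (cnt n c)) * Fx k P f Y n c) = marg_lik f Y n e P (G - 1)"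
    unfolding marg_lik_def mix_lik_def using expand_sum[OF k ek Pk fm fn, where k=k] Gk by simp
  finally show ?thesis .
qed

definition Hg :: "nat \<Rightarrow> ('y \<Rightarrow> 'x \<Rightarrow> real) \<Rightarrow> (nat \<Rightarrow> 'y) \<Rightarrow> nat \<Rightarrow> nat \<Rightarrow> (nat \<Rightarrow> real) \<times> (nat \<Rightarrow> 'x) \<Rightarrow> real" where
  "Hg G f Y n g \<theta> = (\<Prod>i<n. (\<Sum>h<G. fst \<theta> h * f (Y i) (snd \<theta> h)) - fst \<theta> g * f (Y i) (snd \<theta> g))"

lemma Hg_last:
  assumes "G \<ge> 1"
  shows "Hg G f Y n (G - 1) \<theta> = (\<Prod>i<n. \<Sum>h<G - 1. fst \<theta> h * f (Y i) (snd \<theta> h))"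
proof -
  obtain k where "G = Suc k" using assms by (cases G) auto
  then show ?thesis unfolding Hg_def by (simp add: sum.lessThan_Suc)
qed

lemma Hg_meas:
  assumes P: "\<forall>g<G. sets (P g) = sets X" and fm: "\<forall>y. f y \<in> borel_measurable X" and g: "g < G"
  shows "Hg G f Y n g \<in> borel_measurable (mixture_prior G e P)"
  unfolding Hg_def using P fm g
  by (intro borel_measurable_prod borel_measurable_sum borel_measurable_diff borel_measurable_times
        meas_prior_fst meas_prior_f) auto

definition relab :: "nat \<Rightarrow> (nat \<Rightarrow> nat) \<Rightarrow> (nat \<Rightarrow> real) \<times> (nat \<Rightarrow> 'x) \<Rightarrow> (nat \<Rightarrow> real) \<times> (nat \<Rightarrow> 'x)" where
  "relab G \<sigma> = (\<lambda>(\<tau>, \<xi>). (\<lambda>g\<in>{..<G}. \<tau> (\<sigma> g), \<lambda>g\<in>{..<G}. \<xi> (\<sigma> g)))"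

lemma relab_meas:
  assumes P: "\<forall>g<G. sets (P g) = sets X" and \<sigma>: "\<sigma> permutes {..<G}"
  shows "relab G \<sigma> \<in> measurable (mixture_prior G e P) (mixture_prior G e P)"
proof -
  have sg: "\<sigma> h < G" if "h < G" for h using permutes_in_image[OF \<sigma>] that by auto
  have A: "(\<lambda>\<tau>. \<lambda>g\<in>{..<G}. \<tau> (\<sigma> g)) \<in> measurable (PiM {..<G} (\<lambda>_. borel :: real measure)) (PiM {..<G} (\<lambda>_. borel))"
    by (rule measurable_restrict) (use sg in auto)
  have B: "(\<lambda>\<xi>. \<lambda>g\<in>{..<G}. \<xi> (\<sigma> g)) \<in> measurable (PiM {..<G} P) (PiM {..<G} P)"
  proof (rule measurable_restrict)
    fix h assume h: "h \<in> {..<G}"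
    have "(\<lambda>\<xi>. \<xi> (\<sigma> h)) \<in> measurable (PiM {..<G} P) (P (\<sigma> h))"
      using sg h by auto
    moreover have "sets (P (\<sigma> h)) = sets (P h)" using P sg h by auto
    ultimately show "(\<lambda>\<xi>. \<xi> (\<sigma> h)) \<in> measurable (PiM {..<G} P) (P h)"
      using measurable_cong_sets by blast
  qed
  have "relab G \<sigma> \<in> measurable (PiM {..<G} (\<lambda>_. borel) \<Otimes>\<^sub>M PiM {..<G} P) (PiM {..<G} (\<lambda>_. borel) \<Otimes>\<^sub>M PiM {..<G} P)"
    unfolding relab_def split_beta'
    using A B by measurable
  then show ?thesis
    by (subst measurable_cong_sets[OF sets_prior sets_prior])
qed

lemma Hg_relab:
  assumes \<sigma>: "\<sigma> permutes {..<G}" and g: "g < G"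
  shows "Hg G f Y n g (relab G \<sigma> \<theta>) = Hg G f Y n (\<sigma> g) \<theta>"
proof -
  have sg: "\<sigma> h < G" if "h < G" for h using permutes_in_image[OF \<sigma>] that by auto
  have s: "(\<Sum>h<G. fst \<theta> (\<sigma> h) * f (Y i) (snd \<theta> (\<sigma> h))) = (\<Sum>h<G. fst \<theta> h * f (Y i) (snd \<theta> h))" for i
    using sum.reindex_bij_betw[OF permutes_imp_bij[OF \<sigma>], of "\<lambda>h. fst \<theta> h * f (Y i) (snd \<theta> h)"] by simp
  show ?thesis
    unfolding Hg_def relab_def using g s by (simp add: case_prod_beta)
qed

lemma relabel_integral:
  assumes P: "\<forall>g<G. sets (P g) = sets X" and fm: "\<forall>y. f y \<in> borel_measurable X"
    and relabel: "\<forall>\<sigma>. \<sigma> permutes {..<G} \<longrightarrow>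
        distr (mixture_prior G e P) (mixture_prior G e P)
          (\<lambda>(\<tau>, \<xi>). (\<lambda>g\<in>{..<G}. \<tau> (\<sigma> g), \<lambda>g\<in>{..<G}. \<xi> (\<sigma> g))) = mixture_prior G e P"
    and g: "g < G" and g': "g' < G"
  shows "(\<integral>\<^sup>+\<theta>. ennreal (Hg G f Y n g \<theta>) \<partial>mixture_prior G e P) = (\<integral>\<^sup>+\<theta>. ennreal (Hg G f Y n g' \<theta>) \<partial>mixture_prior G e P)"
proof -
  define \<sigma> where "\<sigma> = Transposition.transpose g g'"
  have \<sigma>: "\<sigma> permutes {..<G}" unfolding \<sigma>_def using g g' by (intro permutes_swap_id) auto
  have d: "distr (mixture_prior G e P) (mixture_prior G e P) (relab G \<sigma>) = mixture_prior G e P"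
    using relabel \<sigma> unfolding relab_def by blast
  have "(\<integral>\<^sup>+\<theta>. ennreal (Hg G f Y n g \<theta>) \<partial>mixture_prior G e P)
     = (\<integral>\<^sup>+\<theta>. ennreal (Hg G f Y n g \<theta>) \<partial>distr (mixture_prior G e P) (mixture_prior G e P) (relab G \<sigma>))"
    by (simp add: d)
  also have "\<dots> = (\<integral>\<^sup>+\<theta>. ennreal (Hg G f Y n g (relab G \<sigma> \<theta>)) \<partial>mixture_prior G e P)"
    using Hg_meas[OF P fm g] relab_meas[OF P \<sigma>] by (subst nn_integral_distr) auto
  also have "\<dots> = (\<integral>\<^sup>+\<theta>. ennreal (Hg G f Y n g' \<theta>) \<partial>mixture_prior G e P)"
    using Hg_relab[OF \<sigma> g, where f=f and Y=Y and n=n] by (simp add: \<sigma>_def)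
  finally show ?thesis .
qed

lemma pw_facts:
  assumes t: "\<forall>h<G. fst \<theta> h \<ge> 0" and fn: "\<forall>y x. f y x \<ge> 0" and g: "g < G"
  shows "0 \<le> zprob f Y G \<theta> i g" "zprob f Y G \<theta> i g \<le> 1"
    "mix_lik f Y n G \<theta> * (\<Prod>i<n. 1 - zprob f Y G \<theta> i g) = Hg G f Y n g \<theta>"
    "Hg G f Y n g \<theta> \<ge> 0"
proof -
  define S where "S i = (\<Sum>h<G. fst \<theta> h * f (Y i) (snd \<theta> h))" for i
  define a where "a i = fst \<theta> g * f (Y i) (snd \<theta> g)" for i
  have a0: "a i \<ge> 0" for i unfolding a_def using t fn g by auto
  have aS: "a i \<le> S i" for i
    unfolding a_def S_def using t fn g
    by (intro member_le_sum[where f="\<lambda>h. fst \<theta> h * f (Y i) (snd \<theta> h)"]) auto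
  have z: "zprob f Y G \<theta> i g = a i / S i" for i unfolding zprob_def a_def S_def ..
  show "0 \<le> zprob f Y G \<theta> i g" unfolding z using a0[of i] aS[of i] by (intro divide_nonneg_nonneg) auto
  show "zprob f Y G \<theta> i g \<le> 1" unfolding z using a0[of i] aS[of i]
    by (cases "S i = 0") (auto simp: divide_le_eq_1)
  have ml: "mix_lik f Y n G \<theta> = (\<Prod>i<n. S i)" unfolding mix_lik_def S_def ..
  have hg: "Hg G f Y n g \<theta> = (\<Prod>i<n. S i - a i)" unfolding Hg_def S_def a_def ..
  have "S i * (1 - a i / S i) = S i - a i" for i
  proof (cases "S i = 0")
    case True
    then have "a i = 0" using a0[of i] aS[of i] by simp
    then show ?thesis using True by simp
  next
    case False
    then show ?thesis by (simp add: algebra_simps)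
  qed
  then show "mix_lik f Y n G \<theta> * (\<Prod>i<n. 1 - zprob f Y G \<theta> i g) = Hg G f Y n g \<theta>"
    unfolding ml hg z by (simp add: prod.distrib[symmetric])
  show "Hg G f Y n g \<theta> \<ge> 0" unfolding hg using aS by (intro prod_nonneg) auto
qed

lemma mix_lik_meas:
  assumes P: "\<forall>g<G. sets (P g) = sets X" and fm: "\<forall>y. f y \<in> borel_measurable X"
  shows "mix_lik f Y n G \<in> borel_measurable (mixture_prior G e P)"
  unfolding mix_lik_def[abs_def] using P fm
  by (intro borel_measurable_prod borel_measurable_sum borel_measurable_times
        meas_prior_fst meas_prior_f) auto

lemma zprob_meas:
  assumes P: "\<forall>g<G. sets (P g) = sets X" and fm: "\<forall>y. f y \<in> borel_measurable X" and g: "g < G"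
  shows "(\<lambda>\<theta>. zprob f Y G \<theta> i g) \<in> borel_measurable (mixture_prior G e P)"
  unfolding zprob_def using P fm g
  by (intro borel_measurable_divide borel_measurable_sum borel_measurable_times
        meas_prior_fst meas_prior_f) auto

lemma p0_formula:
  assumes G: "G \<ge> 1" and e: "\<forall>g<G. e g > 0"
    and P: "\<forall>g<G. prob_space (P g) \<and> sets (P g) = sets X"
    and fm: "\<forall>y. f y \<in> borel_measurable X" and fn: "\<forall>y x. f y x \<ge> 0"
    and relabel: "\<forall>\<sigma>. \<sigma> permutes {..<G} \<longrightarrow>
        distr (mixture_prior G e P) (mixture_prior G e P)
          (\<lambda>(\<tau>, \<xi>). (\<lambda>g\<in>{..<G}. \<tau> (\<sigma> g), \<lambda>g\<in>{..<G}. \<xi> (\<sigma> g))) = mixture_prior G e P"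
    and Z_pos: "0 < marg_lik f Y n e P G" and Z_fin: "marg_lik f Y n e P G < \<infinity>"
  shows "ennreal (p0 f Y n e P G) =
     (\<integral>\<^sup>+\<theta>. ennreal (Hg G f Y n (G - 1) \<theta>) \<partial>mixture_prior G e P) / marg_lik f Y n e P G"
proof -
  let ?M = "mixture_prior G e P"
  let ?Z = "marg_lik f Y n e P G"
  let ?post = "posterior f Y n e P G"
  define h where "h \<theta> = (1 / real G) * (\<Sum>g<G. \<Prod>i<n. (1 - zprob f Y G \<theta> i g))" for \<theta>
  have Ps: "\<forall>g<G. sets (P g) = sets X" using P by auto
  have mm: "mix_lik f Y n G \<in> borel_measurable ?M" by (rule mix_lik_meas[OF Ps fm])
  have hm: "h \<in> borel_measurable ?M"
    unfolding h_def using zprob_meas[OF Ps fm]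
    by (intro borel_measurable_times borel_measurable_sum borel_measurable_prod borel_measurable_diff) auto
  have post: "?post = density ?M (\<lambda>\<theta>. ennreal (mix_lik f Y n G \<theta>) / ?Z)"
    unfolding posterior_def ..
  have sets_post: "sets ?post = sets ?M" unfolding post by simp
  have Z0: "?Z \<noteq> 0" "?Z \<noteq> \<infinity>" using Z_pos Z_fin by auto
  have "emeasure ?post (space ?post) = (\<integral>\<^sup>+\<theta>. ennreal (mix_lik f Y n G \<theta>) / ?Z \<partial>?M)"
    unfolding post using mm by (subst emeasure_density) (auto simp: space_density)
  also have "\<dots> = ?Z / ?Z" using mm by (subst nn_integral_divide) (auto simp: marg_lik_def)
  also have "\<dots> = 1" using Z_pos Z_fin by (intro ennreal_divide_self) auto
  finally interpret PS: prob_space ?post by standard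
  have AEM: "AE \<theta> in ?M. \<forall>h<G. fst \<theta> h \<ge> 0" by (rule prior_AE_nonneg[OF G e P])
  have AEpost: "AE \<theta> in ?post. \<forall>h<G. fst \<theta> h \<ge> 0"
    unfolding post using mm by (subst AE_density) (auto intro: eventually_mono[OF AEM])
  have hb: "0 \<le> h \<theta> \<and> h \<theta> \<le> 1" if t: "\<forall>h<G. fst \<theta> h \<ge> 0" for \<theta>
  proof -
    have pb: "0 \<le> (\<Prod>i<n. 1 - zprob f Y G \<theta> i g) \<and> (\<Prod>i<n. 1 - zprob f Y G \<theta> i g) \<le> 1" if g: "g < G" for g
      using pw_facts(1,2)[OF t fn g] by (auto intro!: prod_nonneg prod_le_1)
    have "(\<Sum>g<G. \<Prod>i<n. 1 - zprob f Y G \<theta> i g) \<le> (\<Sum>g<G. 1)"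
      using pb by (intro sum_mono) auto
    moreover have "0 \<le> (\<Sum>g<G. \<Prod>i<n. 1 - zprob f Y G \<theta> i g)" using pb by (intro sum_nonneg) auto
    ultimately show ?thesis unfolding h_def using G by (auto simp: field_simps)
  qed
  have hint: "integrable ?post h"
  proof (rule PS.integrable_const_bound[where B=1])
    show "AE x in ?post. norm (h x) \<le> 1" using AEpost by eventually_elim (use hb in auto)
    show "h \<in> borel_measurable ?post" using hm by (simp add: measurable_cong_sets[OF sets_post refl])
  qed
  have "ennreal (p0 f Y n e P G) = ennreal (integral\<^sup>L ?post h)"
    unfolding p0_def h_def ..
  also have "\<dots> = (\<integral>\<^sup>+\<theta>. ennreal (h \<theta>) \<partial>?post)"
    using hint by (subst nn_integral_eq_integral) (auto intro: eventually_mono[OF AEpost] simp: hb)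
  also have "\<dots> = (\<integral>\<^sup>+\<theta>. ennreal (mix_lik f Y n G \<theta>) / ?Z * ennreal (h \<theta>) \<partial>?M)"
    unfolding post using mm hm by (subst nn_integral_density) auto
  also have "\<dots> = (\<integral>\<^sup>+\<theta>. ennreal (1 / real G) * (\<Sum>g<G. ennreal (Hg G f Y n g \<theta>)) / ?Z \<partial>?M)"
  proof (rule nn_integral_cong_AE)
    show "AE \<theta> in ?M. ennreal (mix_lik f Y n G \<theta>) / ?Z * ennreal (h \<theta>) = ennreal (1 / real G) * (\<Sum>g<G. ennreal (Hg G f Y n g \<theta>)) / ?Z"
      using AEM
    proof eventually_elim
      case (elim \<theta>)
      have ml0: "mix_lik f Y n G \<theta> \<ge> 0" unfolding mix_lik_def using elim fn
        by (intro prod_nonneg sum_nonneg mult_nonneg_nonneg) auto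
      have h0: "h \<theta> \<ge> 0" using hb[OF elim] by simp
      have eq: "mix_lik f Y n G \<theta> * h \<theta> = (1 / real G) * (\<Sum>g<G. Hg G f Y n g \<theta>)"
        unfolding h_def using pw_facts(3)[OF elim fn] by (simp add: sum_distrib_left algebra_simps)
      have s: "ennreal (\<Sum>g<G. Hg G f Y n g \<theta>) = (\<Sum>g<G. ennreal (Hg G f Y n g \<theta>))"
        using pw_facts(4)[OF elim fn] by (subst sum_ennreal) auto
      have s0: "0 \<le> (\<Sum>g<G. Hg G f Y n g \<theta>)" using pw_facts(4)[OF elim fn] by (intro sum_nonneg) auto
      have "ennreal (mix_lik f Y n G \<theta>) / ?Z * ennreal (h \<theta>) = ennreal (mix_lik f Y n G \<theta> * h \<theta>) / ?Z"
        using ml0 h0 by (simp add: ennreal_mult divide_ennreal_def mult_ac)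
      also have "\<dots> = ennreal (1 / real G) * ennreal (\<Sum>g<G. Hg G f Y n g \<theta>) / ?Z"
        unfolding eq using s0 by (subst ennreal_mult) auto
      finally show ?case unfolding s .
    qed
  qed
  also have "\<dots> = (\<integral>\<^sup>+\<theta>. ennreal (1 / real G) * (\<Sum>g<G. ennreal (Hg G f Y n g \<theta>)) \<partial>?M) / ?Z"
    using Hg_meas[OF Ps fm] by (subst nn_integral_divide) auto
  also have "(\<integral>\<^sup>+\<theta>. ennreal (1 / real G) * (\<Sum>g<G. ennreal (Hg G f Y n g \<theta>)) \<partial>?M)
      = ennreal (1 / real G) * (\<Sum>g<G. \<integral>\<^sup>+\<theta>. ennreal (Hg G f Y n g \<theta>) \<partial>?M)"
  proof -
    have hm': "(\<lambda>\<theta>. ennreal (Hg G f Y n g \<theta>)) \<in> borel_measurable ?M" if "g < G" for g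
      using Hg_meas[OF Ps fm that] by simp
    have "(\<lambda>\<theta>. \<Sum>g<G. ennreal (Hg G f Y n g \<theta>)) \<in> borel_measurable ?M"
      using hm' by (intro borel_measurable_sum) auto
    moreover have "(\<integral>\<^sup>+\<theta>. (\<Sum>g<G. ennreal (Hg G f Y n g \<theta>)) \<partial>?M) = (\<Sum>g<G. \<integral>\<^sup>+\<theta>. ennreal (Hg G f Y n g \<theta>) \<partial>?M)"
      by (rule nn_integral_sum) (use hm' in auto)
    ultimately show ?thesis by (simp add: nn_integral_cmult)
  qed
  also have "(\<Sum>g<G. \<integral>\<^sup>+\<theta>. ennreal (Hg G f Y n g \<theta>) \<partial>?M) = (\<Sum>g<G. \<integral>\<^sup>+\<theta>. ennreal (Hg G f Y n (G - 1) \<theta>) \<partial>?M)"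
    using G by (intro sum.cong refl relabel_integral[OF Ps fm relabel]) auto
  also have "ennreal (1 / real G) * \<dots> = (\<integral>\<^sup>+\<theta>. ennreal (Hg G f Y n (G - 1) \<theta>) \<partial>?M)"
  proof -
    have "ennreal (1 / real G) * of_nat G = 1"
      using G by (simp add: ennreal_of_nat_eq_real_of_nat ennreal_mult[symmetric])
    then show ?thesis by (simp add: mult.assoc[symmetric])
  qed
  finally show ?thesis .
qed

lemma D_eq:
  assumes "G \<ge> (1::nat)"
  shows "{c \<in> {..<n} \<rightarrow>\<^sub>E {..<G}. G - 1 \<notin> c ` {..<n}} = {..<n} \<rightarrow>\<^sub>E {..<G - 1}"
proof (intro set_eqI iffI)
  fix c assume "c \<in> {c \<in> {..<n} \<rightarrow>\<^sub>E {..<G}. G - 1 \<notin> c ` {..<n}}"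
  then have c: "\<forall>i<n. c i < G" "c \<in> extensional {..<n}" "\<forall>i<n. c i \<noteq> G - 1"
    unfolding PiE_iff by (auto simp del: One_nat_def) (metis image_eqI lessThan_iff)
  have "\<forall>i<n. c i < G - 1"
  proof (intro allI impI)
    fix i assume "i < n"
    then have "c i < G" "c i \<noteq> G - 1" using c by auto
    then show "c i < G - 1" by linarith
  qed
  then show "c \<in> {..<n} \<rightarrow>\<^sub>E {..<G - 1}" using c(2) unfolding PiE_iff by auto
next
  fix c assume c: "c \<in> {..<n} \<rightarrow>\<^sub>E {..<G - 1}"
  have "\<forall>i<n. c i < G - 1" using PiE_lt[OF c] by blast
  then have "\<forall>i<n. c i < G \<and> c i \<noteq> G - 1" by fastforce
  then show "c \<in> {c \<in> {..<n} \<rightarrow>\<^sub>E {..<G}. G - 1 \<notin> c ` {..<n}}"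
    using c unfolding PiE_iff by auto
qed

lemma AE_expand:
  fixes n k :: nat
  assumes K: "K \<ge> 1" and e: "\<forall>g<K. e g > 0"
    and P: "\<forall>g<K. prob_space (P g) \<and> sets (P g) = sets X"
    and fn: "\<forall>y x. f y x \<ge> 0" and k: "k \<le> K"
  shows "AE \<theta> in mixture_prior K e P. ennreal (\<Prod>i<n. \<Sum>g<k. fst \<theta> g * f (Y i) (snd \<theta> g))
       = (\<Sum>c\<in>{..<n} \<rightarrow>\<^sub>E {..<k}. ennreal (\<Prod>i<n. fst \<theta> (c i) * f (Y i) (snd \<theta> (c i))))"
  using prior_AE_nonneg[OF K e P]
proof eventually_elim
  case (elim \<theta>)
  have nn: "0 \<le> (\<Prod>i<n. fst \<theta> (c i) * f (Y i) (snd \<theta> (c i)))" if "c \<in> {..<n} \<rightarrow>\<^sub>E {..<k}" for c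
    using elim PiE_lt'[OF that _ k] fn by (intro prod_nonneg mult_nonneg_nonneg) auto
  show ?case
    by (subst prod_sum_PiE) (auto simp: nn)
qed

lemma joint_formula:
  fixes n G :: nat
  assumes G: "G \<ge> 1" and e: "\<forall>g<G. e g > 0"
    and P: "\<forall>g<G. prob_space (P g) \<and> sets (P g) = sets X"
    and fm: "\<forall>y. f y \<in> borel_measurable X" and fn: "\<forall>y x. f y x \<ge> 0"
  shows "emeasure (joint_posterior f Y n e P G)
             {(\<theta>, c) \<in> space (joint_posterior f Y n e P G). G - 1 \<notin> c ` {..<n}}
     = (\<integral>\<^sup>+\<theta>. ennreal (Hg G f Y n (G - 1) \<theta>) \<partial>mixture_prior G e P) / marg_lik f Y n e P G"
proof -
  let ?M = "mixture_prior G e P"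
  let ?Z = "marg_lik f Y n e P G"
  define CC where "CC = {..<n} \<rightarrow>\<^sub>E {..<G}"
  define D where "D = {c \<in> CC. G - 1 \<notin> c ` {..<n}}"
  define F where "F (c::nat\<Rightarrow>nat) \<theta> = ennreal (\<Prod>i<n. fst \<theta> (c i) * f (Y i) (snd \<theta> (c i))) / ?Z" for c \<theta>
  let ?MC = "?M \<Otimes>\<^sub>M count_space CC"
  have Ps: "\<forall>g<G. sets (P g) = sets X" using P by auto
  have finCC: "finite CC" unfolding CC_def by (intro finite_PiE) auto
  interpret CS: sigma_finite_measure "count_space CC" by (rule sigma_finite_measure_count_space_finite[OF finCC])
  have J: "joint_posterior f Y n e P G = density ?MC (\<lambda>x. F (snd x) (fst x))"
    unfolding joint_posterior_def CC_def F_def by (simp add: case_prod_beta')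
  have Fm: "(\<lambda>\<theta>. F c \<theta>) \<in> borel_measurable ?M" if c: "c \<in> CC" for c
  proof -
    have ci: "c i < G" if "i < n" for i using c that unfolding CC_def by auto
    have "(\<lambda>\<theta>. ennreal (\<Prod>i<n. fst \<theta> (c i) * f (Y i) (snd \<theta> (c i)))) \<in> borel_measurable ?M"
      using ci Ps fm
      by (intro measurable_compose[OF _ measurable_ennreal] borel_measurable_prod borel_measurable_times meas_prior_fst meas_prior_f) auto
    then show ?thesis unfolding F_def by (rule borel_measurable_divide_ennreal) simp
  qed
  have dm: "(\<lambda>x. F (snd x) (fst x)) \<in> borel_measurable ?MC"
  proof -
    have "(\<lambda>x. F c (fst x)) \<in> borel_measurable ?MC" if "c \<in> CC" for c
      using Fm[OF that] by (rule measurable_compose[OF measurable_fst])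
    moreover have "snd \<in> measurable ?MC (count_space CC)" by (rule measurable_snd)
    ultimately show ?thesis
      using measurable_compose_countable'[where I=CC and f="\<lambda>i x. F i (fst x)" and g=snd and M="?MC" and N=borel]
        finCC countable_finite by blast
  qed
  have A: "{(\<theta>, c) \<in> space (joint_posterior f Y n e P G). G - 1 \<notin> c ` {..<n}} = space ?M \<times> D"
    unfolding J D_def by (auto simp: space_pair_measure)
  have As: "space ?M \<times> D \<in> sets ?MC"
    by (rule pair_measureI) (auto simp: D_def)
  have "emeasure (joint_posterior f Y n e P G) (space ?M \<times> D)
      = (\<integral>\<^sup>+x. F (snd x) (fst x) * indicator (space ?M \<times> D) x \<partial>?MC)"
    unfolding J using dm As by (rule emeasure_density)
  also have "\<dots> = (\<integral>\<^sup>+\<theta>. \<integral>\<^sup>+c. F c \<theta> * indicator (space ?M \<times> D) (\<theta>, c) \<partial>count_space CC \<partial>?M)"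
    using dm As by (subst CS.nn_integral_fst[symmetric]) auto
  also have "\<dots> = (\<integral>\<^sup>+\<theta>. (\<Sum>c\<in>{..<n} \<rightarrow>\<^sub>E {..<G - 1}. F c \<theta>) \<partial>?M)"
  proof (rule nn_integral_cong)
    fix \<theta> assume t: "\<theta> \<in> space ?M"
    have "(\<integral>\<^sup>+c. F c \<theta> * indicator (space ?M \<times> D) (\<theta>, c) \<partial>count_space CC)
        = (\<Sum>c\<in>CC. F c \<theta> * indicator (space ?M \<times> D) (\<theta>, c))"
      by (rule nn_integral_count_space_finite[OF finCC])
    also have "\<dots> = (\<Sum>c\<in>CC. if c \<in> D then F c \<theta> else 0)"
      using t by (intro sum.cong refl) (auto simp: indicator_def)
    also have "\<dots> = (\<Sum>c\<in>D. F c \<theta>)"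
      using finCC by (simp add: sum.If_cases D_def Int_def)
    also have "(\<Sum>c\<in>D. F c \<theta>) = (\<Sum>c\<in>{..<n} \<rightarrow>\<^sub>E {..<G - 1}. F c \<theta>)"
      unfolding D_def CC_def D_eq[OF G] ..
    finally show "(\<integral>\<^sup>+c. F c \<theta> * indicator (space ?M \<times> D) (\<theta>, c) \<partial>count_space CC)
        = (\<Sum>c\<in>{..<n} \<rightarrow>\<^sub>E {..<G - 1}. F c \<theta>)" .
  qed
  also have "\<dots> = (\<integral>\<^sup>+\<theta>. (\<Sum>c\<in>{..<n} \<rightarrow>\<^sub>E {..<G - 1}. ennreal (\<Prod>i<n. fst \<theta> (c i) * f (Y i) (snd \<theta> (c i)))) / ?Z \<partial>?M)"
    unfolding F_def by (simp add: divide_ennreal_def sum_distrib_right)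
  also have "\<dots> = (\<integral>\<^sup>+\<theta>. ennreal (Hg G f Y n (G - 1) \<theta>) / ?Z \<partial>?M)"
  proof (rule nn_integral_cong_AE)
    show "AE \<theta> in ?M. (\<Sum>c\<in>{..<n} \<rightarrow>\<^sub>E {..<G - 1}. ennreal (\<Prod>i<n. fst \<theta> (c i) * f (Y i) (snd \<theta> (c i)))) / ?Z
        = ennreal (Hg G f Y n (G - 1) \<theta>) / ?Z"
      using AE_expand[OF G e P fn diff_le_self[of G 1], where n=n and Y=Y] unfolding Hg_last[OF G]
      by eventually_elim simp
  qed
  also have "\<dots> = (\<integral>\<^sup>+\<theta>. ennreal (Hg G f Y n (G - 1) \<theta>) \<partial>?M) / ?Z"
    using Hg_meas[OF Ps fm, of "G - 1"] G by (subst nn_integral_divide) auto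
  finally show ?thesis unfolding A .
qed

lemma cons_combine:
  assumes Om: "prob_space \<Omega>" and cX: "consistent \<Omega> X a" and cY: "consistent \<Omega> Y b" and b: "b > 0"
  shows "consistent \<Omega> (\<lambda>T \<omega>. K * X T \<omega> * (1 / Y T \<omega>)) (K * a / b)"
proof -
  interpret prob_space \<Omega> by (rule Om)
  have Xm: "X T \<in> borel_measurable \<Omega>" and Ym: "Y T \<in> borel_measurable \<Omega>" for T
    using cX cY unfolding consistent_def by auto
  have Xc: "(\<lambda>T. measure \<Omega> {\<omega> \<in> space \<Omega>. \<bar>X T \<omega> - a\<bar> > \<epsilon>}) \<longlonglongrightarrow> 0" if "\<epsilon> > 0" for \<epsilon>
    using cX that unfolding consistent_def by auto
  have Yc: "(\<lambda>T. measure \<Omega> {\<omega> \<in> space \<Omega>. \<bar>Y T \<omega> - b\<bar> > \<epsilon>}) \<longlonglongrightarrow> 0" if "\<epsilon> > 0" for \<epsilon>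
    using cY that unfolding consistent_def by auto
  define \<phi> where "\<phi> = (\<lambda>p::real \<times> real. K * fst p * (1 / snd p))"
  have "continuous (at (a, b)) \<phi>"
    unfolding \<phi>_def using b by (intro continuous_intros) auto
  then have cont: "\<forall>\<epsilon> > 0. \<exists>d > 0. \<forall>p. dist p (a, b) < d \<longrightarrow> dist (\<phi> p) (\<phi> (a, b)) < \<epsilon>"
    unfolding continuous_at_eps_delta .
  show ?thesis
    unfolding consistent_def
  proof (intro conjI allI impI)
    fix T show "(\<lambda>\<omega>. K * X T \<omega> * (1 / Y T \<omega>)) \<in> borel_measurable \<Omega>"
      using Xm Ym by measurable
  next
    fix \<epsilon> :: real assume e: "\<epsilon> > 0"
    obtain d where d: "d > 0" "\<And>p. dist p (a, b) < d \<Longrightarrow> dist (\<phi> p) (\<phi> (a, b)) < \<epsilon>"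
      using cont e by blast
    define d' where "d' = d / 3"
    have d': "d' > 0" using d by (simp add: d'_def)
    have incl: "{\<omega> \<in> space \<Omega>. \<bar>K * X T \<omega> * (1 / Y T \<omega>) - K * a / b\<bar> > \<epsilon>}
        \<subseteq> {\<omega> \<in> space \<Omega>. \<bar>X T \<omega> - a\<bar> > d'} \<union> {\<omega> \<in> space \<Omega>. \<bar>Y T \<omega> - b\<bar> > d'}" for T
    proof
      fix \<omega> assume w: "\<omega> \<in> {\<omega> \<in> space \<Omega>. \<bar>K * X T \<omega> * (1 / Y T \<omega>) - K * a / b\<bar> > \<epsilon>}"
      show "\<omega> \<in> {\<omega> \<in> space \<Omega>. \<bar>X T \<omega> - a\<bar> > d'} \<union> {\<omega> \<in> space \<Omega>. \<bar>Y T \<omega> - b\<bar> > d'}"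
      proof (rule ccontr)
        assume "\<omega> \<notin> {\<omega> \<in> space \<Omega>. \<bar>X T \<omega> - a\<bar> > d'} \<union> {\<omega> \<in> space \<Omega>. \<bar>Y T \<omega> - b\<bar> > d'}"
        then have h: "\<bar>X T \<omega> - a\<bar> \<le> d'" "\<bar>Y T \<omega> - b\<bar> \<le> d'" using w by auto
        have "dist (X T \<omega>, Y T \<omega>) (a, b) \<le> \<bar>X T \<omega> - a\<bar> + \<bar>Y T \<omega> - b\<bar>"
          unfolding dist_Pair_Pair dist_real_def using sqrt_sum_squares_le_sum_abs[of "X T \<omega> - a" "Y T \<omega> - b"] by simp
        also have "\<dots> < d" using h d by (simp add: d'_def)
        finally have "dist (\<phi> (X T \<omega>, Y T \<omega>)) (\<phi> (a, b)) < \<epsilon>" by (rule d(2))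
        then have "\<bar>K * X T \<omega> * (1 / Y T \<omega>) - K * a / b\<bar> < \<epsilon>"
          by (simp add: \<phi>_def dist_real_def)
        then show False using w by simp
      qed
    qed
    have sX: "{\<omega> \<in> space \<Omega>. \<bar>X T \<omega> - a\<bar> > d'} \<in> sets \<Omega>" for T using Xm[of T] by measurable
    have sY: "{\<omega> \<in> space \<Omega>. \<bar>Y T \<omega> - b\<bar> > d'} \<in> sets \<Omega>" for T using Ym[of T] by measurable
    have bound: "norm (measure \<Omega> {\<omega> \<in> space \<Omega>. \<bar>K * X T \<omega> * (1 / Y T \<omega>) - K * a / b\<bar> > \<epsilon>})
        \<le> measure \<Omega> {\<omega> \<in> space \<Omega>. \<bar>X T \<omega> - a\<bar> > d'} + measure \<Omega> {\<omega> \<in> space \<Omega>. \<bar>Y T \<omega> - b\<bar> > d'}" for T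
    proof -
      have "measure \<Omega> {\<omega> \<in> space \<Omega>. \<bar>K * X T \<omega> * (1 / Y T \<omega>) - K * a / b\<bar> > \<epsilon>}
          \<le> measure \<Omega> ({\<omega> \<in> space \<Omega>. \<bar>X T \<omega> - a\<bar> > d'} \<union> {\<omega> \<in> space \<Omega>. \<bar>Y T \<omega> - b\<bar> > d'})"
        using incl[of T] sX[of T] sY[of T] by (intro finite_measure_mono) auto
      also have "\<dots> \<le> measure \<Omega> {\<omega> \<in> space \<Omega>. \<bar>X T \<omega> - a\<bar> > d'} + measure \<Omega> {\<omega> \<in> space \<Omega>. \<bar>Y T \<omega> - b\<bar> > d'}"
        using sX[of T] sY[of T] by (intro measure_subadditive) auto
      finally show ?thesis by simp
    qed
    show "(\<lambda>T. measure \<Omega> {\<omega> \<in> space \<Omega>. \<bar>K * X T \<omega> * (1 / Y T \<omega>) - K * a / b\<bar> > \<epsilon>}) \<longlonglongrightarrow> 0"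
    proof (rule Lim_null_comparison)
      show "\<forall>\<^sub>F T in sequentially. norm (measure \<Omega> {\<omega> \<in> space \<Omega>. \<bar>K * X T \<omega> * (1 / Y T \<omega>) - K * a / b\<bar> > \<epsilon>})
        \<le> measure \<Omega> {\<omega> \<in> space \<Omega>. \<bar>X T \<omega> - a\<bar> > d'} + measure \<Omega> {\<omega> \<in> space \<Omega>. \<bar>Y T \<omega> - b\<bar> > d'}"
        using bound by (intro always_eventually allI)
      show "(\<lambda>T. measure \<Omega> {\<omega> \<in> space \<Omega>. \<bar>X T \<omega> - a\<bar> > d'} + measure \<Omega> {\<omega> \<in> space \<Omega>. \<bar>Y T \<omega> - b\<bar> > d'}) \<longlonglongrightarrow> 0"
        using tendsto_add[OF Xc[OF d'] Yc[OF d']] by simp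
    qed
  qed
qed

theorem theorem5:
  fixes f :: "'y \<Rightarrow> 'x \<Rightarrow> real" and Y :: "nat \<Rightarrow> 'y" and n G :: nat
    and e :: "nat \<Rightarrow> real" and P :: "nat \<Rightarrow> 'x measure" and X :: "'x measure"
    and \<Omega> :: "'w measure"
    and draws :: "nat \<Rightarrow> 'w \<Rightarrow> (nat \<Rightarrow> real) \<times> (nat \<Rightarrow> 'x)"
    and Zhat_prev :: "nat \<Rightarrow> 'w \<Rightarrow> real"
  assumes G2: "G \<ge> 2"
    and e_pos: "\<forall>g<G. e g > 0"
    and P_prob: "\<forall>g<G. prob_space (P g) \<and> sets (P g) = sets X"
    and f_meas: "\<forall>y. f y \<in> borel_measurable X"
    and f_nonneg: "\<forall>y x. f y x \<ge> 0"
    and relabel: "\<forall>\<sigma>. \<sigma> permutes {..<G} \<longrightarrow>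
        distr (mixture_prior G e P) (mixture_prior G e P)
          (\<lambda>(\<tau>, \<xi>). (\<lambda>g\<in>{..<G}. \<tau> (\<sigma> g), \<lambda>g\<in>{..<G}. \<xi> (\<sigma> g))) = mixture_prior G e P"
    and Z_pos: "0 < marg_lik f Y n e P G" and Z_fin: "marg_lik f Y n e P G < \<infinity>"
    and Omega: "prob_space \<Omega>"
    and Zprev_cons: "consistent \<Omega> Zhat_prev (enn2real (marg_lik f Y n e P (G - 1)))"
    and p0_cons: "consistent \<Omega> (p0_hat f Y n G draws) (p0 f Y n e P G)"
    and p0_pos: "p0 f Y n e P G > 0"
  shows "consistent \<Omega>
           (\<lambda>T \<omega>. Gamma (\<Sum>g<G. e g) * Gamma (real n + (\<Sum>g<G - 1. e g))
                   / (Gamma (real n + (\<Sum>g<G. e g)) * Gamma (\<Sum>g<G - 1. e g))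
                   * Zhat_prev T \<omega> * (1 / p0_hat f Y n G draws T \<omega>))
           (enn2real (marg_lik f Y n e P G))
       \<and> ennreal (p0 f Y n e P G) =
           emeasure (joint_posterior f Y n e P G)
             {(\<theta>, c) \<in> space (joint_posterior f Y n e P G). G - 1 \<notin> c ` {..<n}}"
proof -
  let ?Z = "marg_lik f Y n e P G"
  let ?Z' = "marg_lik f Y n e P (G - 1)"
  let ?N = "(\<integral>\<^sup>+\<theta>. ennreal (Hg G f Y n (G - 1) \<theta>) \<partial>mixture_prior G e P)"
  have G1: "G \<ge> 1" using G2 by simp
  have Ps: "\<forall>g<G. sets (P g) = sets X" using P_prob by auto
  have N1: "?N = ennreal (Cst n G e) * ?Z'"
    unfolding Hg_last[OF G1] by (rule Z_relation[OF G2 e_pos P_prob f_meas f_nonneg])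
  have p0eq: "ennreal (p0 f Y n e P G) = ?N / ?Z"
    by (rule p0_formula[OF G1 e_pos P_prob f_meas f_nonneg relabel Z_pos Z_fin])
  have jeq: "emeasure (joint_posterior f Y n e P G)
             {(\<theta>, c) \<in> space (joint_posterior f Y n e P G). G - 1 \<notin> c ` {..<n}} = ?N / ?Z"
    by (rule joint_formula[OF G1 e_pos P_prob f_meas f_nonneg])
  define z where "z = enn2real ?Z"
  have Zz: "?Z = ennreal z" "z > 0" using Z_pos Z_fin unfolding z_def
    by (auto simp: ennreal_enn2real_if enn2real_positive_iff)
  have C: "Cst n G e > 0" by (rule Cst_pos[OF G2 e_pos])
  have "?N = ennreal (p0 f Y n e P G) * ?Z"
  proof -
    have "ennreal (p0 f Y n e P G) * ?Z = ?N / ?Z * ?Z" by (simp add: p0eq)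
    also have "\<dots> = ?N * (?Z / ?Z)" by (rule ennreal_divide_times)
    also have "\<dots> = ?N" using Z_pos Z_fin by (simp add: ennreal_divide_self)
    finally show ?thesis ..
  qed
  then have "ennreal (Cst n G e) * ?Z' = ennreal (p0 f Y n e P G * z)"
    using N1 Zz p0_pos by (simp add: ennreal_mult)
  then have eq: "?Z' * ennreal (Cst n G e) = ennreal (p0 f Y n e P G * z)" by (simp add: mult.commute)
  have "?Z' = ?Z' * ennreal (Cst n G e) / ennreal (Cst n G e)"
    using C by (simp add: ennreal_mult_divide_eq)
  also have "\<dots> = ennreal (p0 f Y n e P G * z / Cst n G e)"
    unfolding eq using C p0_pos Zz by (simp add: divide_ennreal)
  finally have "?Z' = ennreal (p0 f Y n e P G * z / Cst n G e)" .
  then have z': "enn2real ?Z' = p0 f Y n e P G * z / Cst n G e"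
    using C p0_pos Zz by simp
  have zz: "enn2real ?Z = Cst n G e * enn2real ?Z' / p0 f Y n e P G"
    unfolding z' z_def[symmetric] using C p0_pos by (simp add: field_simps)
  have cons: "consistent \<Omega> (\<lambda>T \<omega>. Cst n G e * Zhat_prev T \<omega> * (1 / p0_hat f Y n G draws T \<omega>))
      (Cst n G e * enn2real ?Z' / p0 f Y n e P G)"
    by (rule cons_combine[OF Omega Zprev_cons p0_cons p0_pos])
  show ?thesis
    using cons jeq p0eq unfolding zz Cst_def by simp
qed

end
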